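(* Let $\lambda_1=\lambda_2>\lambda_3>0$ and $D=\mathrm{diag}(\lambda_1,\lambda_1,\lambda_3)$. Then: (i) $\mathrm{diag}(-1,-1,1)$ is the unique global maximum of $\widetilde W_{1,0}(\cdot;D)$ on $SO(3)$. (ii) If $\lambda_1>1$, the global minima of $\widetilde W_{1,0}(\cdot;D)$ on $SO(3)$ are exactly the two rotations $$\begin{pmatrix}\frac1{\lambda_1} & \mp\sqrt{1-\frac1{\lambda_1^2}} & 0\\ \pm\sqrt{1-\frac1{\lambda_1^2}} & \frac1{\lambda_1} & 0\\ 0&0&1\end{pmatrix}.$$ (iii) If $\lambda_1\le1$, then $\mathbb I_3$ is the unique global minimum of $\widetilde W_{1,0}(\cdot;D)$ on $SO(3)$.
   Context: $\mathrm{sym}(Y)=\tfrac12(Y+Y^T)$, $\|Y\|^2=\mathrm{tr}(Y^TY)$. $\widetilde W_{1,0}(R;D)=\|\mathrm{sym}(R^TD-\mathbb I_3)\|^2$ for $R\in SO(3)$. *)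

theory Defs
  imports "HOL-Analysis.Analysis"
begin

definition SO3 :: "(real^3^3) set" where
  "SO3 = {R. transpose R ** R = mat 1 \<and> det R = 1}"

definition msym :: "real^3^3 \<Rightarrow> real^3^3" where
  "msym Y = (1/2) *\<^sub>R (Y + transpose Y)"

definition frob_sq :: "real^3^3 \<Rightarrow> real" where
  "frob_sq Y = trace (transpose Y ** Y)"

definition W10 :: "real^3^3 \<Rightarrow> real^3^3 \<Rightarrow> real" where
  "W10 R D = frob_sq (msym (transpose R ** D - mat 1))"

definition diag3 :: "real \<Rightarrow> real \<Rightarrow> real \<Rightarrow> real^3^3" where
  "diag3 a b c = (\<chi> i j. if i = j then (if i = 1 then a else if i = 2 then b else c) else 0)"

definition rotz :: "real \<Rightarrow> real \<Rightarrow> real^3^3" where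
  "rotz c s = (\<chi> i j. if i = 1 \<and> j = 1 then c else if i = 1 \<and> j = 2 then -s
     else if i = 2 \<and> j = 1 then s else if i = 2 \<and> j = 2 then c
     else if i = 3 \<and> j = 3 then 1 else 0)"

end

theory Submission
  imports Defs
begin

lemma sq3_zero: "(a::real)^2 + b^2 + c^2 = 0 \<Longrightarrow> a = 0 \<and> b = 0 \<and> c = 0"
proof -
  assume h: "a^2 + b^2 + c^2 = 0"
  have "a^2 = 0" "b^2 = 0" "c^2 = 0" using h zero_le_power2[of a] zero_le_power2[of b] zero_le_power2[of c] by linarith+
  then show ?thesis by simp
qed

lemma W10_expand:
  "W10 R (diag3 a a c) = (c*R$3$3 - 1)^2 + (a*R$1$1-1)^2 + (a*R$2$2-1)^2 + a^2*(R$1$2+R$2$1)^2/2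
     + ((a*R$1$3 + c*R$3$1)^2 + (a*R$2$3+c*R$3$2)^2)/2"
  unfolding W10_def frob_sq_def msym_def trace_def diag3_def
  by (simp add: matrix_matrix_mult_def transpose_def sum_3 mat_def power2_eq_square algebra_simps divide_simps)

lemma cross_lemma:
  fixes a1 a2 a3 b1 b2 b3 c1 c2 c3 :: real
  assumes "a1^2+a2^2+a3^2 = 1" "b1^2+b2^2+b3^2 = 1" "c1^2+c2^2+c3^2 = 1"
    "a1*b1+a2*b2+a3*b3 = 0"
    "c1*(a2*b3-a3*b2) + c2*(a3*b1-a1*b3) + c3*(a1*b2-a2*b1) = 1"
  shows "c1 = a2*b3-a3*b2 \<and> c2 = a3*b1-a1*b3 \<and> c3 = a1*b2-a2*b1"
proof -
  have "(c1 - (a2*b3-a3*b2))^2 + (c2 - (a3*b1-a1*b3))^2 + (c3 - (a1*b2-a2*b1))^2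
     = (c1^2+c2^2+c3^2) - 2*(c1*(a2*b3-a3*b2) + c2*(a3*b1-a1*b3) + c3*(a1*b2-a2*b1))
       + (a1^2+a2^2+a3^2)*(b1^2+b2^2+b3^2) - (a1*b1+a2*b2+a3*b3)^2"
    by (simp add: power2_eq_square algebra_simps)
  also have "\<dots> = 0" using assms by simp
  finally show ?thesis by (auto dest!: sq3_zero)
qed

lemma real_core:
  fixes x11 x12 x13 x21 x22 x23 x31 x32 x33 a c :: real
  assumes c11: "x11^2+x21^2+x31^2 = 1" and c22: "x12^2+x22^2+x32^2 = 1" and c33: "x13^2+x23^2+x33^2=1"
    and c12: "x11*x12+x21*x22+x31*x32 = 0" and c13: "x11*x13+x21*x23+x31*x33 = 0"
    and c23: "x12*x13+x22*x23+x32*x33 = 0"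
    and r11: "x11^2+x12^2+x13^2 = 1" and r22: "x21^2+x22^2+x23^2 = 1" and r33: "x31^2+x32^2+x33^2=1"
    and dt: "x11*x22*x33 + x12*x23*x31 + x13*x21*x32 - x11*x23*x32 - x12*x21*x33 - x13*x22*x31 = 1"
  shows "(c*x33 - 1)^2 + (a*x11-1)^2 + (a*x22-1)^2 + a^2*(x12+x21)^2/2
     + ((a*x13 + c*x31)^2 + (a*x23+c*x32)^2)/2
     = c^2*x33^2/2 - (2*c+a^2)*x33 + a^2*(x11+x22)^2/2 - a*(x11+x22)*(2+c-c*x33) + 3 + a^2 + c^2/2"
    and "(x11+x22)^2 + (x21-x12)^2 = (1+x33)^2"
    and "(x11-x22)^2 + (x21+x12)^2 = (1-x33)^2"
    and "x31^2+x32^2 = 1 - x33^2" and "x13^2+x23^2 = 1 - x33^2"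
proof -
  have X3: "x13 = x21*x32 - x31*x22 \<and> x23 = x31*x12 - x11*x32 \<and> x33 = x11*x22 - x21*x12"
    by (rule cross_lemma) (use c11 c22 c33 c12 dt in \<open>simp_all add: algebra_simps\<close>)
  have X1: "x11 = x22*x33 - x32*x23 \<and> x21 = x32*x13 - x12*x33 \<and> x31 = x12*x23 - x22*x13"
    by (rule cross_lemma) (use c11 c22 c33 c23 dt in \<open>simp_all add: algebra_simps\<close>)
  have X2: "x12 = x23*x31 - x33*x21 \<and> x22 = x33*x11 - x13*x31 \<and> x32 = x13*x21 - x23*x11"
    by (rule cross_lemma) (use c11 c22 c33 c13 dt in \<open>simp_all add: algebra_simps\<close>)
  have eA: "x12^2+x21^2 = 1+x33^2-x11^2-x22^2" using r11 r22 c33 by linarith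
  have eB: "x12*x21 = x11*x22 - x33" using X3 by (simp add: algebra_simps)
  show eC: "x31^2+x32^2 = 1 - x33^2" using r33 by linarith
  show eD: "x13^2+x23^2 = 1 - x33^2" using c33 by linarith
  have h1: "x11 = x22*x33 - x32*x23" using X1 by blast
  have h2: "x22 = x33*x11 - x13*x31" using X2 by blast
  have s0: "(x22*x33 - x32*x23) + (x33*x11 - x13*x31) - (x11+x22) = 0" using h1 h2 by linarith
  have s1: "x13*x31 + x23*x32 = (x11+x22)*(x33-1) - ((x22*x33 - x32*x23) + (x33*x11 - x13*x31) - (x11+x22))"
    by (simp add: algebra_simps)
  have eE: "x13*x31 + x23*x32 = (x11+x22)*(x33-1)" using s1 unfolding s0 by simp
  have "(c*x33 - 1)^2 + (a*x11-1)^2 + (a*x22-1)^2 + a^2*(x12+x21)^2/2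
     + ((a*x13 + c*x31)^2 + (a*x23+c*x32)^2)/2
     = (c*x33 - 1)^2 + a^2*(x11^2+x22^2) - 2*a*(x11+x22) + 2 + a^2*(x12^2+x21^2)/2 + a^2*(x12*x21)
       + (a^2*(x13^2+x23^2) + c^2*(x31^2+x32^2) + 2*a*c*(x13*x31 + x23*x32))/2"
    by (simp add: power2_eq_square algebra_simps)
  also have "\<dots> = (c*x33 - 1)^2 + a^2*(x11^2+x22^2) - 2*a*(x11+x22) + 2 + a^2*(1+x33^2-x11^2-x22^2)/2 + a^2*(x11*x22 - x33)
       + (a^2*(1 - x33^2) + c^2*(1 - x33^2) + 2*a*c*((x11+x22)*(x33-1)))/2"
    by (simp only: eA eB eC eD eE)
  also have "\<dots> = c^2*x33^2/2 - (2*c+a^2)*x33 + a^2*(x11+x22)^2/2 - a*(x11+x22)*(2+c-c*x33) + 3 + a^2 + c^2/2"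
    by (simp add: power2_eq_square field_simps)
  finally show "(c*x33 - 1)^2 + (a*x11-1)^2 + (a*x22-1)^2 + a^2*(x12+x21)^2/2
     + ((a*x13 + c*x31)^2 + (a*x23+c*x32)^2)/2
     = c^2*x33^2/2 - (2*c+a^2)*x33 + a^2*(x11+x22)^2/2 - a*(x11+x22)*(2+c-c*x33) + 3 + a^2 + c^2/2" .
  have "(x11+x22)^2 + (x21-x12)^2 = (x11^2+x22^2+(x12^2+x21^2)) + 2*x11*x22 - 2*(x12*x21)"
    by (simp add: power2_eq_square algebra_simps)
  also have "\<dots> = (1+x33)^2" unfolding eA eB by (simp add: power2_eq_square algebra_simps)
  finally show "(x11+x22)^2 + (x21-x12)^2 = (1+x33)^2" .
  have "(x11-x22)^2 + (x21+x12)^2 = (x11^2+x22^2+(x12^2+x21^2)) - 2*x11*x22 + 2*(x12*x21)"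
    by (simp add: power2_eq_square algebra_simps)
  also have "\<dots> = (1-x33)^2" unfolding eA eB by (simp add: power2_eq_square algebra_simps)
  finally show "(x11-x22)^2 + (x21+x12)^2 = (1-x33)^2" .
qed

definition FF :: "real \<Rightarrow> real \<Rightarrow> real \<Rightarrow> real \<Rightarrow> real" where
  "FF a c P z = c^2*z^2/2 - (2*c+a^2)*z + a^2*P^2/2 - a*P*(2+c-c*z) + 3 + a^2 + c^2/2"

lemma FF_id: "FF a c P z - (c-1)^2 = 2*(a*P/2 - 1 - c*(1-z)/2)^2 + (1-z)*(a^2-c^2)"
  unfolding FF_def by (simp add: power2_eq_square field_simps)

lemma absP: assumes "P^2 \<le> (1+z)^2" "-1 \<le> (z::real)" shows "\<bar>P\<bar> \<le> 1+z"
  using assms abs_le_square_iff[of P "1+z"] by simp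

lemma FF_min:
  assumes "a > c" "c > 0" "P^2 \<le> (1+z)^2" "-1 \<le> z" "z \<le> 1"
  shows "FF a c P z \<ge> (c-1)^2" and "FF a c P z = (c-1)^2 \<Longrightarrow> z = 1 \<and> a*P = 2"
proof -
  have ac: "a^2 - c^2 > 0"
  proof -
    have "a^2 - c^2 = (a-c)*(a+c)" by (simp add: power2_eq_square algebra_simps)
    then show ?thesis using assms by simp
  qed
  have t: "(1-z)*(a^2-c^2) \<ge> 0" using ac assms by simp
  show "FF a c P z \<ge> (c-1)^2" using FF_id[of a c P z] t zero_le_power2[of "a*P/2 - 1 - c*(1-z)/2"] by linarith
  assume e: "FF a c P z = (c-1)^2"
  have "(1-z)*(a^2-c^2) = 0" using FF_id[of a c P z] t zero_le_power2[of "a*P/2 - 1 - c*(1-z)/2"] e by linarith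
  then have z: "z = 1" using ac by simp
  then have "(a*P/2 - 1)^2 = 0" using FF_id[of a c P z] e by simp
  then show "z = 1 \<and> a*P = 2" using z by simp
qed

lemma FF_min2:
  assumes "a > c" "c > 0" "a \<le> 1" "P^2 \<le> (1+z)^2" "-1 \<le> z" "z \<le> 1"
  shows "FF a c P z \<ge> (c-1)^2 + 2*(a-1)^2" and "FF a c P z = (c-1)^2 + 2*(a-1)^2 \<Longrightarrow> z = 1 \<and> P = 2"
proof -
  have ac: "a^2 - c^2 > 0"
  proof -
    have "a^2 - c^2 = (a-c)*(a+c)" by (simp add: power2_eq_square algebra_simps)
    then show ?thesis using assms by simp
  qed
  have t: "(1-z)*(a^2-c^2) \<ge> 0" using ac assms by simp
  have P: "P \<le> 1+z" using absP assms by fastforce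
  define y where "y = a*P/2 - 1 - c*(1-z)/2"
  have "a*P/2 \<le> a*(1+z)/2" using P assms by simp
  moreover have "c*(1-z)/2 \<ge> 0" using assms by simp
  moreover have "a*(1+z)/2 \<le> a" using assms by simp
  ultimately have yle: "y \<le> a - 1" unfolding y_def by linarith
  have y2: "y^2 \<ge> (a-1)^2" using abs_le_square_iff[of "a-1" y] yle assms by simp
  show "FF a c P z \<ge> (c-1)^2 + 2*(a-1)^2" using FF_id[of a c P z] t y2 unfolding y_def by linarith
  assume e: "FF a c P z = (c-1)^2 + 2*(a-1)^2"
  have "(1-z)*(a^2-c^2) = 0" using FF_id[of a c P z] t y2 e unfolding y_def by linarith
  then have z: "z = 1" using ac by simp
  have "y^2 = (a-1)^2" using FF_id[of a c P z] e z unfolding y_def by simp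
  then have "y = a - 1 \<or> y = -(a - 1)" by (simp add: power2_eq_iff)
  then have "y = a - 1" using yle assms by linarith
  then have "a*P = a*2" using z unfolding y_def by simp
  then show "z = 1 \<and> P = 2" using z assms by simp
qed

lemma FF_max:
  assumes "a > c" "c > 0" "P^2 \<le> (1+z)^2" "-1 \<le> z" "z \<le> 1"
  shows "FF a c P z \<le> (c-1)^2 + 2*(a+1)^2" and "FF a c P z = (c-1)^2 + 2*(a+1)^2 \<Longrightarrow> z = 1 \<and> P = -2"
proof -
  have aP: "\<bar>P\<bar> \<le> 1+z" using absP assms by fastforce
  define y where "y = a*P/2 - 1 - c*(1-z)/2"
  define K where "K = a*(1+z)/2 + 1 + c*(1-z)/2"
  define T where "T = (1-z)*(a^2-c^2)"
  define Q where "Q = (1-z)*(a-c)*(a+2-c - (1-z)*(a-c)/2)"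
  have idf: "FF a c P z - (c-1)^2 = 2*y^2 + T" using FF_id[of a c P z] unfolding y_def T_def .
  have "\<bar>a*P\<bar> \<le> a*(1+z)" using aP assms by (simp add: abs_mult)
  then have "a*P/2 \<le> a*(1+z)/2" "-(a*(1+z)/2) \<le> a*P/2" by (simp_all add: abs_le_iff)
  moreover have "c*(1-z)/2 \<ge> 0" using assms by simp
  ultimately have yK: "\<bar>y\<bar> \<le> K" unfolding y_def K_def abs_le_iff by linarith
  have y2: "y^2 \<le> K^2" using yK abs_le_square_iff[of y K] by simp
  have key: "(a+1)^2 - K^2 - T/2 = Q/2"
    unfolding K_def T_def Q_def by (simp add: power2_eq_square field_simps)
  have f3: "a+2-c - (1-z)*(a-c)/2 \<ge> 2"
  proof -
    have "(1-z)*(a-c) \<le> 2*(a-c)" using assms by (intro mult_right_mono) auto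
    moreover have "\<forall>m::real. m \<le> 2*(a-c) \<longrightarrow> 2 \<le> a+2-c-m/2" by auto
    ultimately show ?thesis by blast
  qed
  have nn: "Q \<ge> 0" unfolding Q_def using f3 assms by simp
  show "FF a c P z \<le> (c-1)^2 + 2*(a+1)^2" using idf y2 key nn by linarith
  assume e: "FF a c P z = (c-1)^2 + 2*(a+1)^2"
  have "Q = 0" using idf y2 key nn e by linarith
  then have z: "z = 1" using f3 assms unfolding Q_def by simp
  have "y^2 = (a+1)^2" using idf e z unfolding T_def by simp
  then have "y = a + 1 \<or> y = -(a+1)" by (simp add: power2_eq_iff)
  moreover have "y \<le> a - 1"
  proof -
    have "P \<le> 2" using aP z by simp
    then have "a*P \<le> a*2" using assms by (intro mult_left_mono) auto
    then show ?thesis using z unfolding y_def by simp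
  qed
  ultimately have "y = -(a+1)" using assms by auto
  then have "a*P = a*(-2)" using z unfolding y_def by (simp add: algebra_simps)
  moreover have "a \<noteq> 0" using assms by simp
  ultimately have "P = -2" by (metis mult_left_cancel)
  then show "z = 1 \<and> P = -2" using z by simp
qed

lemma SO3_entries:
  assumes "R \<in> SO3"
  shows "R$1$1^2+R$2$1^2+R$3$1^2 = 1" "R$1$2^2+R$2$2^2+R$3$2^2 = 1" "R$1$3^2+R$2$3^2+R$3$3^2=1"
    "R$1$1*R$1$2+R$2$1*R$2$2+R$3$1*R$3$2 = 0" "R$1$1*R$1$3+R$2$1*R$2$3+R$3$1*R$3$3 = 0"
    "R$1$2*R$1$3+R$2$2*R$2$3+R$3$2*R$3$3 = 0"
    "R$1$1^2+R$1$2^2+R$1$3^2 = 1" "R$2$1^2+R$2$2^2+R$2$3^2 = 1" "R$3$1^2+R$3$2^2+R$3$3^2=1"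
    "R$1$1*R$2$2*R$3$3 + R$1$2*R$2$3*R$3$1 + R$1$3*R$2$1*R$3$2 - R$1$1*R$2$3*R$3$2 - R$1$2*R$2$1*R$3$3 - R$1$3*R$2$2*R$3$1 = 1"
proof -
  have T: "transpose R ** R = mat 1" and D: "det R = 1" using assms unfolding SO3_def by auto
  have T2: "R ** transpose R = mat 1" using T orthogonal_matrix orthogonal_matrix_def by metis
  have e: "(transpose R ** R)$i$j = (mat 1::real^3^3)$i$j" for i j using T by simp
  have e2: "(R ** transpose R)$i$j = (mat 1::real^3^3)$i$j" for i j using T2 by simp
  note ss = matrix_matrix_mult_def transpose_def sum_3 mat_def power2_eq_square
  show "R$1$1^2+R$2$1^2+R$3$1^2 = 1" using e[of 1 1] by (simp add: ss)
  show "R$1$2^2+R$2$2^2+R$3$2^2 = 1" using e[of 2 2] by (simp add: ss)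
  show "R$1$3^2+R$2$3^2+R$3$3^2 = 1" using e[of 3 3] by (simp add: ss)
  show "R$1$1*R$1$2+R$2$1*R$2$2+R$3$1*R$3$2 = 0" using e[of 1 2] by (simp add: ss)
  show "R$1$1*R$1$3+R$2$1*R$2$3+R$3$1*R$3$3 = 0" using e[of 1 3] by (simp add: ss)
  show "R$1$2*R$1$3+R$2$2*R$2$3+R$3$2*R$3$3 = 0" using e[of 2 3] by (simp add: ss)
  show "R$1$1^2+R$1$2^2+R$1$3^2 = 1" using e2[of 1 1] by (simp add: ss)
  show "R$2$1^2+R$2$2^2+R$2$3^2 = 1" using e2[of 2 2] by (simp add: ss)
  show "R$3$1^2+R$3$2^2+R$3$3^2 = 1" using e2[of 3 3] by (simp add: ss)
  show "R$1$1*R$2$2*R$3$3 + R$1$2*R$2$3*R$3$1 + R$1$3*R$2$1*R$3$2 - R$1$1*R$2$3*R$3$2 - R$1$2*R$2$1*R$3$3 - R$1$3*R$2$2*R$3$1 = 1"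
    using D by (simp add: det_3)
qed

lemma W_SO3:
  assumes "R \<in> SO3"
  shows "W10 R (diag3 a a c) = FF a c (R$1$1+R$2$2) (R$3$3)"
    "(R$1$1+R$2$2)^2 \<le> (1+R$3$3)^2" "-1 \<le> R$3$3" "R$3$3 \<le> 1"
proof -
  note E = SO3_entries[OF assms]
  note C1 = real_core(1)[where a=a and c=c, OF E]
  note C = real_core(2-5)[OF E]
  show "W10 R (diag3 a a c) = FF a c (R$1$1+R$2$2) (R$3$3)"
    unfolding W10_expand FF_def by (rule C1)
  show "(R$1$1+R$2$2)^2 \<le> (1+R$3$3)^2" using C(1) zero_le_power2[of "R$2$1 - R$1$2"] by linarith
  have "R$3$3^2 \<le> 1" using E(3) zero_le_power2[of "R$1$3"] zero_le_power2[of "R$2$3"] by linarith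
  then show "-1 \<le> R$3$3" "R$3$3 \<le> 1" using abs_square_le_1 by (auto simp: abs_le_iff)
qed

lemma z1_rotz:
  assumes "R \<in> SO3" "R$3$3 = 1"
  shows "R = rotz (R$1$1) (R$2$1)" "R$1$1^2 + R$2$1^2 = 1"
proof -
  note E = SO3_entries[OF assms(1)]
  note C = real_core(2-5)[OF E]
  have a: "R$3$1 = 0" "R$3$2 = 0" "R$1$3 = 0" "R$2$3 = 0"
    using C(3) C(4) assms(2) by (auto dest!: sq3_zero[of _ _ 0])
  have b: "R$2$2 = R$1$1" "R$1$2 = - R$2$1"
    using C(2) assms(2) by (auto dest!: sq3_zero[of _ _ 0])
  show "R$1$1^2 + R$2$1^2 = 1" using E(1) a by simp
  show "R = rotz (R$1$1) (R$2$1)"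
    unfolding rotz_def vec_eq_iff forall_3 using a b assms(2) by simp
qed

lemma rotz_SO3: assumes "p^2 + s^2 = 1" shows "rotz p s \<in> SO3"
  unfolding SO3_def using assms
  by (simp add: vec_eq_iff forall_3 matrix_matrix_mult_def transpose_def sum_3 mat_def det_3 rotz_def power2_eq_square algebra_simps)

lemma rotz_entries: "rotz p s $1$1 = p" "rotz p s $2$2 = p" "rotz p s $3$3 = 1" "rotz p s $2$1 = s"
  by (simp_all add: rotz_def)

lemma diag_rotz: "diag3 (-1) (-1) 1 = rotz (-1) 0" "mat 1 = rotz 1 0"
  by (simp_all add: vec_eq_iff forall_3 diag3_def rotz_def mat_def)


lemma z1_P:
  assumes "R \<in> SO3" "R$3$3 = 1" "R$1$1 + R$2$2 = 2*p"
  shows "R = rotz p (R$2$1)" "p^2 + R$2$1^2 = 1"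
proof -
  have r: "R = rotz (R$1$1) (R$2$1)" and n: "R$1$1^2 + R$2$1^2 = 1" using z1_rotz assms by auto
  have "R$2$2 = R$1$1" using r rotz_entries by metis
  then have "R$1$1 = p" using assms(3) by simp
  then show "R = rotz p (R$2$1)" "p^2 + R$2$1^2 = 1" using r n by auto
qed

lemma W_rotz: assumes "p^2 + s^2 = 1" shows "W10 (rotz p s) (diag3 a a c) = FF a c (2*p) 1"
  using W_SO3(1)[OF rotz_SO3[OF assms]] by (simp add: rotz_entries)

theorem mainTheorem10:
  fixes l1 l3 :: real
  assumes "l1 > l3" and "l3 > 0"
  shows "(diag3 (-1) (-1) 1 \<in> SO3 \<and>
           (\<forall>R\<in>SO3. R \<noteq> diag3 (-1) (-1) 1 \<longrightarrow>
              W10 R (diag3 l1 l1 l3) < W10 (diag3 (-1) (-1) 1) (diag3 l1 l1 l3)))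
       \<and> (l1 > 1 \<longrightarrow>
           {R \<in> SO3. \<forall>S\<in>SO3. W10 R (diag3 l1 l1 l3) \<le> W10 S (diag3 l1 l1 l3)} =
           {rotz (1/l1) (sqrt (1 - 1/l1^2)), rotz (1/l1) (- sqrt (1 - 1/l1^2))})
       \<and> (l1 \<le> 1 \<longrightarrow>
           mat 1 \<in> SO3 \<and> (\<forall>R\<in>SO3. R \<noteq> mat 1 \<longrightarrow>
              W10 (mat 1) (diag3 l1 l1 l3) < W10 R (diag3 l1 l1 l3)))"
proof (intro conjI impI)
  let ?D = "diag3 l1 l1 l3"
  have l1p: "l1 > 0" using assms by simp
  note WS1 = W_SO3(1)[where a=l1 and c=l3]
  show dS: "diag3 (-1) (-1) 1 \<in> SO3" unfolding diag_rotz by (rule rotz_SO3) simp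
  have Wd: "W10 (diag3 (-1) (-1) 1) ?D = (l3-1)^2 + 2*(l1+1)^2"
  proof -
    have "(-l1-1)^2 = (l1+1)^2" by (simp add: power2_eq_square algebra_simps)
    then show ?thesis unfolding diag_rotz using W_rotz[of "-1" 0 l1 l3] FF_id[of l1 l3 "-2" 1] by simp
  qed
  show "\<forall>R\<in>SO3. R \<noteq> diag3 (-1) (-1) 1 \<longrightarrow> W10 R ?D < W10 (diag3 (-1) (-1) 1) ?D"
  proof (intro ballI impI)
    fix R assume R: "R \<in> SO3" "R \<noteq> diag3 (-1) (-1) 1"
    note M = FF_max[OF assms W_SO3(2-4)[OF R(1)]]
    have "W10 R ?D \<noteq> W10 (diag3 (-1) (-1) 1) ?D"
    proof
      assume "W10 R ?D = W10 (diag3 (-1) (-1) 1) ?D"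
      then have "R$3$3 = 1 \<and> R$1$1 + R$2$2 = -2" using M(2) WS1[OF R(1)] Wd by simp
      then have "R = rotz (-1) (R$2$1)" "(-1)^2 + R$2$1^2 = 1" using z1_P[OF R(1), of "-1"] by auto
      then have "R = rotz (-1) 0" by simp
      then show False using R(2) diag_rotz by simp
    qed
    then show "W10 R ?D < W10 (diag3 (-1) (-1) 1) ?D" using M(1) WS1[OF R(1)] Wd by simp
  qed
next
  assume a1: "l1 > 1"
  let ?D = "diag3 l1 l1 l3"
  have l1p: "l1 > 0" using assms by simp
  note WS1 = W_SO3(1)[where a=l1 and c=l3]
  define s0 where "s0 = sqrt (1 - 1/l1^2)"
  have "1/l1^2 \<le> 1" using a1 by (simp add: divide_le_eq_1 one_le_power)
  then have s0sq: "s0^2 = 1 - 1/l1^2" unfolding s0_def by simp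
  have ps: "(1/l1)^2 + s0^2 = 1" "(1/l1)^2 + (-s0)^2 = 1" using s0sq by (simp_all add: power_divide)
  have Wm: "W10 (rotz (1/l1) s) ?D = (l3-1)^2" if "(1/l1)^2 + s^2 = 1" for s
    using W_rotz[OF that, of l1 l3] FF_id[of l1 l3 "2*(1/l1)" 1] l1p by simp
  have lb: "W10 S ?D \<ge> (l3-1)^2" if "S \<in> SO3" for S
    using FF_min(1)[OF assms W_SO3(2-4)[OF that]] WS1[OF that] by simp
  show "{R \<in> SO3. \<forall>S\<in>SO3. W10 R ?D \<le> W10 S ?D} =
           {rotz (1/l1) (sqrt (1 - 1/l1^2)), rotz (1/l1) (- sqrt (1 - 1/l1^2))}"
    unfolding s0_def[symmetric]
  proof
    show "{rotz (1/l1) s0, rotz (1/l1) (- s0)} \<subseteq> {R \<in> SO3. \<forall>S\<in>SO3. W10 R ?D \<le> W10 S ?D}"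
      using rotz_SO3[OF ps(1)] rotz_SO3[OF ps(2)] Wm[OF ps(1)] Wm[OF ps(2)] lb by auto
    show "{R \<in> SO3. \<forall>S\<in>SO3. W10 R ?D \<le> W10 S ?D} \<subseteq> {rotz (1/l1) s0, rotz (1/l1) (- s0)}"
    proof
      fix R assume "R \<in> {R \<in> SO3. \<forall>S\<in>SO3. W10 R ?D \<le> W10 S ?D}"
      then have R: "R \<in> SO3" and le: "W10 R ?D \<le> W10 (rotz (1/l1) s0) ?D"
        using rotz_SO3[OF ps(1)] by auto
      have "W10 R ?D = (l3-1)^2" using le Wm[OF ps(1)] lb[OF R] by simp
      then have "R$3$3 = 1 \<and> l1*(R$1$1 + R$2$2) = 2"
        using FF_min(2)[OF assms W_SO3(2-4)[OF R]] WS1[OF R] by simp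
      then have h: "R$3$3 = 1" "R$1$1 + R$2$2 = 2*(1/l1)" using l1p by (auto simp: field_simps)
      then have "R = rotz (1/l1) (R$2$1)" "(1/l1)^2 + R$2$1^2 = 1" using z1_P[OF R] by auto
      moreover have "R$2$1 = s0 \<or> R$2$1 = -s0"
      proof -
        have "R$2$1^2 = s0^2" using calculation(2) ps(1) by simp
        then show ?thesis by (simp add: power2_eq_iff)
      qed
      ultimately show "R \<in> {rotz (1/l1) s0, rotz (1/l1) (- s0)}" by auto
    qed
  qed
next
  assume a1: "l1 \<le> 1"
  let ?D = "diag3 l1 l1 l3"
  note WS1 = W_SO3(1)[where a=l1 and c=l3]
  show mS: "mat 1 \<in> SO3" unfolding diag_rotz by (rule rotz_SO3) simp
  have Wi: "W10 (mat 1) ?D = (l3-1)^2 + 2*(l1-1)^2"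
    unfolding diag_rotz using W_rotz[of 1 0 l1 l3] FF_id[of l1 l3 2 1] by simp
  show "\<forall>R\<in>SO3. R \<noteq> mat 1 \<longrightarrow> W10 (mat 1) ?D < W10 R ?D"
  proof (intro ballI impI)
    fix R assume R: "R \<in> SO3" "R \<noteq> mat 1"
    note M = FF_min2[OF assms a1 W_SO3(2-4)[OF R(1)]]
    have "W10 R ?D \<noteq> W10 (mat 1) ?D"
    proof
      assume "W10 R ?D = W10 (mat 1) ?D"
      then have "R$3$3 = 1 \<and> R$1$1 + R$2$2 = 2" using M(2) WS1[OF R(1)] Wi by simp
      then have "R = rotz 1 (R$2$1)" "1^2 + R$2$1^2 = 1" using z1_P[OF R(1), of 1] by auto
      then have "R = rotz 1 0" by simp
      then show False using R(2) diag_rotz by simp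
    qed
    then show "W10 (mat 1) ?D < W10 R ?D" using M(1) WS1[OF R(1)] Wi by simp
  qed
qed

end
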